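(* Fix $p\in[\tfrac23,1)$. Let $\Phi=\Phi_{\mathsf{Even}}=\sum_{v\in\mathsf{Even}}2^{-N_p(v)}$ and $\mathsf{Window}=\{m\in\mathbb Z_{\ge0}: |m-\mu_p|\le\mu_p^{0.6}\}$. Then, as $d\to\infty$, \[ \frac{\sum_{m\notin\mathsf{Window}}\frac{\Phi^m}{m!}}{\sigma_p\exp(\mu_p)}\xrightarrow{\mathbb P}0 \qquad\text{and}\qquad \frac{\sum_{m\notin\mathsf{Window}}\sum_{S\in\mathsf{Good}^{\mathsf{Even}}_m}2^{-N_p(S)}}{\sigma_p\exp(\mu_p)}\xrightarrow{\mathbb P}0 . \] The same holds with $\mathsf{Even}$ replaced by $\mathsf{Odd}$.
   Context: Setup and notation: - $Q_d=\{0,1\}^d$ is the hypercube graph. - $\mathsf{Even}$ and $\mathsf{Odd}$ are the vertices of even and odd Hamming weight. - $Q_{d,p}$ is obtained by retaining each edge independently with probability $p$. - $N_p(v)$ is the number of neighbors of $v$ in $Q_{d,p}$; for $S$ within one side, $N_p(S)$ is the number of vertices adjacent in $Q_{d,p}$ to some vertex of $S$. - Two same-side vertices are $2$-neighbors if they have a common neighbor in $Q_d$. - $\mathsf{Good}^{\mathsf{Even}}_m$ is the collection of $S\subseteq\mathsf{Even}$ with $|S|=m\le 2^d/d^2$ and no two elements being $2$-neighbors. - $\mu_p=\tfrac12(2-p)^d$ and $\sigma_p^2=\tfrac12(\tfrac{4-3p}{2})^d$. *)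

theory Defs
  imports "HOL-Probability.Probability"
begin

text \<open>Vertices of Q_d are the subsets of {..<d} (indicator sets of 0/1 vectors);
  the Hamming weight is the cardinality.\<close>

definition vertices :: "nat \<Rightarrow> nat set set" where
  "vertices d = Pow {..<d}"

definition hadj :: "nat \<Rightarrow> nat set \<Rightarrow> nat set \<Rightarrow> bool" where
  "hadj d u v \<longleftrightarrow> u \<in> vertices d \<and> v \<in> vertices d \<and> card ((u - v) \<union> (v - u)) = 1"

definition edges :: "nat \<Rightarrow> nat set set set" where
  "edges d = {{u, v} | u v. hadj d u v}"

text \<open>Side of the bipartition: True = Even, False = Odd.\<close>
definition side :: "nat \<Rightarrow> bool \<Rightarrow> nat set set" where
  "side d b = {v \<in> vertices d. even (card v) = b}"

definition Qdp :: "nat \<Rightarrow> real \<Rightarrow> (nat set set \<Rightarrow> bool) pmf" where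
  "Qdp d p = Pi_pmf (edges d) False (\<lambda>_. bernoulli_pmf p)"

definition Np :: "nat \<Rightarrow> (nat set set \<Rightarrow> bool) \<Rightarrow> nat set \<Rightarrow> nat" where
  "Np d \<omega> v = card {u. {u, v} \<in> edges d \<and> \<omega> {u, v}}"

definition NpS :: "nat \<Rightarrow> (nat set set \<Rightarrow> bool) \<Rightarrow> nat set set \<Rightarrow> nat" where
  "NpS d \<omega> S = card {u. \<exists>v\<in>S. {u, v} \<in> edges d \<and> \<omega> {u, v}}"

definition two_nbrs :: "nat \<Rightarrow> nat set \<Rightarrow> nat set \<Rightarrow> bool" where
  "two_nbrs d u v \<longleftrightarrow> (\<exists>w. hadj d u w \<and> hadj d v w)"

definition Good :: "nat \<Rightarrow> bool \<Rightarrow> nat \<Rightarrow> nat set set set" where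
  "Good d b m = {S. S \<subseteq> side d b \<and> card S = m \<and> real m \<le> 2 ^ d / real d ^ 2 \<and>
     (\<forall>u\<in>S. \<forall>v\<in>S. u \<noteq> v \<longrightarrow> \<not> two_nbrs d u v)}"

definition mu :: "real \<Rightarrow> nat \<Rightarrow> real" where
  "mu p d = (1/2) * (2 - p) ^ d"

definition sigma :: "real \<Rightarrow> nat \<Rightarrow> real" where
  "sigma p d = sqrt ((1/2) * ((4 - 3 * p) / 2) ^ d)"

definition Window :: "real \<Rightarrow> nat \<Rightarrow> nat set" where
  "Window p d = {m. \<bar>real m - mu p d\<bar> \<le> mu p d powr 0.6}"

definition Phi :: "nat \<Rightarrow> bool \<Rightarrow> (nat set set \<Rightarrow> bool) \<Rightarrow> real" where
  "Phi d b \<omega> = (\<Sum>v\<in>side d b. 1 / 2 ^ Np d \<omega> v)"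

definition X1 :: "real \<Rightarrow> nat \<Rightarrow> bool \<Rightarrow> (nat set set \<Rightarrow> bool) \<Rightarrow> real" where
  "X1 p d b \<omega> = (\<Sum>m. if m \<notin> Window p d then Phi d b \<omega> ^ m / fact m else 0)
                  / (sigma p d * exp (mu p d))"

definition X2 :: "real \<Rightarrow> nat \<Rightarrow> bool \<Rightarrow> (nat set set \<Rightarrow> bool) \<Rightarrow> real" where
  "X2 p d b \<omega> = (\<Sum>m. if m \<notin> Window p d then (\<Sum>S\<in>Good d b m. 1 / 2 ^ NpS d \<omega> S) else 0)
                  / (sigma p d * exp (mu p d))"

end

theory Submission
  imports Defs "HOL-Real_Asymp.Real_Asymp"
begin

lemma finite_vertices: "finite (vertices d)"
  by (simp add: vertices_def)

lemma vertices_finite_elem: "u \<in> vertices d \<Longrightarrow> finite u"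
  by (auto simp: vertices_def intro: finite_subset)

lemma hadj_sym: "hadj d u v \<Longrightarrow> hadj d v u"
  unfolding hadj_def by (simp add: Un_commute)

lemma sd_single:
  assumes i: "(u - v) \<union> (v - u) = {i}" and iu: "(i::nat) \<in> u"
  shows "u = insert i v \<and> i \<notin> v"
proof -
  have 1: "x \<in> {i}" if "x \<in> u" "x \<notin> v" for x
  proof -
    have "x \<in> (u - v) \<union> (v - u)" using that by simp
    then show ?thesis by (simp only: i)
  qed
  have 2: "x \<in> {i}" if "x \<in> v" "x \<notin> u" for x
  proof -
    have "x \<in> (u - v) \<union> (v - u)" using that by simp
    then show ?thesis by (simp only: i)
  qed
  have 3: "i \<notin> v"
  proof
    assume "i \<in> v"
    then have "i \<notin> (u - v) \<union> (v - u)" using iu by simp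
    then show False by (simp only: i) simp
  qed
  have "u = insert i v"
  proof (rule set_eqI)
    fix x show "x \<in> u \<longleftrightarrow> x \<in> insert i v"
    proof
      assume "x \<in> u" then show "x \<in> insert i v" using 1[of x] by (cases "x \<in> v") auto
    next
      assume "x \<in> insert i v" then show "x \<in> u" using 2[of x] iu by (cases "x \<in> u") auto
    qed
  qed
  then show ?thesis using 3 by simp
qed
lemma hadj_parity:
  assumes "hadj d u v" shows "even (card u) \<noteq> even (card v)"
proof -
  have uv: "u \<in> vertices d" "v \<in> vertices d" using assms unfolding hadj_def by blast+
  have fu: "finite u" and fv: "finite v" using uv vertices_finite_elem by blast+
  have c: "card ((u - v) \<union> (v - u)) = 1" using assms unfolding hadj_def by blast
  obtain i where i: "(u - v) \<union> (v - u) = {i}"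
    using c by (rule card_1_singletonE)
  show ?thesis
  proof (cases "i \<in> u")
    case True
    then have "u = insert i v \<and> i \<notin> v" using sd_single[OF i] by simp
    then have "card u = Suc (card v)" using fv by simp
    then show ?thesis by simp
  next
    case False
    have i': "(v - u) \<union> (u - v) = {i}" using i by (simp add: Un_commute)
    have "i \<in> (u - v) \<union> (v - u)" by (simp only: i) simp
    then have "i \<in> v" using False by simp
    then have "v = insert i u \<and> i \<notin> u" using sd_single[OF i'] by simp
    then have "card v = Suc (card u)" using fu by simp
    then show ?thesis by simp
  qed
qed

lemma finite_edges: "finite (edges d)"
proof -
  have "edges d \<subseteq> Pow (vertices d)"
    by (auto simp: edges_def hadj_def)
  then show ?thesis using finite_vertices finite_subset by blast
qed

lemma no_common_edge:
  assumes "v \<in> side d b" "w \<in> side d b" "v \<noteq> w" "e \<in> edges d"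
  shows "\<not> (v \<in> e \<and> w \<in> e)"
proof
  assume vw: "v \<in> e \<and> w \<in> e"
  from assms(4) obtain x y where e: "e = {x, y}" and h: "hadj d x y"
    unfolding edges_def by blast
  have v: "v = x \<or> v = y" using vw e by simp
  have w: "w = x \<or> w = y" using vw e by simp
  have px: "even (card x) \<noteq> even (card y)" using hadj_parity[OF h] .
  have "even (card v) \<noteq> even (card w)"
    using v w px assms(3) by metis
  moreover have "even (card v) = b" "even (card w) = b" using assms(1,2) unfolding side_def by simp_all
  ultimately show False by simp
qed

lemma Np_eq: "Np d \<omega> v = card {e \<in> edges d. v \<in> e \<and> \<omega> e}"
proof -
  have "bij_betw (\<lambda>u. {u, v}) {u. {u, v} \<in> edges d \<and> \<omega> {u, v}} {e \<in> edges d. v \<in> e \<and> \<omega> e}"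
  proof (rule bij_betw_imageI)
    show "inj_on (\<lambda>u. {u, v}) {u. {u, v} \<in> edges d \<and> \<omega> {u, v}}"
      by (auto simp: inj_on_def doubleton_eq_iff)
    show "(\<lambda>u. {u, v}) ` {u. {u, v} \<in> edges d \<and> \<omega> {u, v}} = {e \<in> edges d. v \<in> e \<and> \<omega> e}"
    proof (intro equalityI subsetI)
      fix e assume "e \<in> {e \<in> edges d. v \<in> e \<and> \<omega> e}"
      then have e: "e \<in> edges d" "v \<in> e" "\<omega> e" by auto
      then obtain x y where "e = {x, y}" by (auto simp: edges_def)
      then obtain u where "e = {u, v}" using e(2) by auto
      then show "e \<in> (\<lambda>u. {u, v}) ` {u. {u, v} \<in> edges d \<and> \<omega> {u, v}}" using e by auto
    qed auto
  qed
  then show ?thesis unfolding Np_def by (rule bij_betw_same_card)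
qed

definition flip :: "nat set \<Rightarrow> nat \<Rightarrow> nat set" where
  "flip v i = (if i \<in> v then v - {i} else insert i v)"

lemma flip_sd: "(flip v i - v) \<union> (v - flip v i) = {i}"
  by (auto simp: flip_def)

lemma flip_vertices: "v \<in> vertices d \<Longrightarrow> i < d \<Longrightarrow> flip v i \<in> vertices d"
  by (auto simp: flip_def vertices_def)

lemma flip_hadj: "v \<in> vertices d \<Longrightarrow> i < d \<Longrightarrow> hadj d (flip v i) v"
  unfolding hadj_def using flip_vertices flip_sd by simp

lemma flip_neq: "flip v i \<noteq> v"
  by (auto simp: flip_def)

lemma flip_inj: "flip v i = flip v j \<Longrightarrow> i = j"
proof -
  assume h: "flip v i = flip v j"
  have "{i} = {j}" using flip_sd[of v i] flip_sd[of v j] h by metis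
  then show "i = j" by simp
qed

lemma deg_ge:
  assumes "v \<in> vertices d"
  shows "d \<le> card {e \<in> edges d. v \<in> e}"
proof -
  have "inj_on (\<lambda>i. {flip v i, v}) {..<d}"
  proof (rule inj_onI)
    fix i j assume "{flip v i, v} = {flip v j, v}"
    then have "(flip v i = flip v j \<and> v = v) \<or> (flip v i = v \<and> v = flip v j)"
      by (simp only: doubleton_eq_iff)
    then have "flip v i = flip v j" using flip_neq by metis
    then show "i = j" by (rule flip_inj)
  qed
  moreover have "(\<lambda>i. {flip v i, v}) ` {..<d} \<subseteq> {e \<in> edges d. v \<in> e}"
  proof
    fix e assume "e \<in> (\<lambda>i. {flip v i, v}) ` {..<d}"
    then obtain i where i: "i < d" "e = {flip v i, v}" by blast
    have "hadj d (flip v i) v" using flip_hadj[OF assms i(1)] .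
    then have "e \<in> edges d" unfolding edges_def using i(2) by blast
    then show "e \<in> {e \<in> edges d. v \<in> e}" using i(2) by simp
  qed
  moreover have "finite {e \<in> edges d. v \<in> e}" using finite_edges by simp
  ultimately have "card {..<d} \<le> card {e \<in> edges d. v \<in> e}"
    by (intro card_inj_on_le) auto
  then show ?thesis by simp
qed

lemma side_vertices: "side d b \<subseteq> vertices d"
  by (auto simp: side_def)

lemma finite_side: "finite (side d b)"
  by (rule finite_subset[OF side_vertices finite_vertices])

lemma card_side:
  assumes "d \<ge> 1"
  shows "real (card (side d b)) \<le> 2 ^ d / 2"
proof -
  have fl: "flip v 0 \<in> side d (\<not> b)" if "v \<in> side d b" for v b
  proof -
    have v: "v \<in> vertices d" "even (card v) = b" using that unfolding side_def by simp_all
    have "hadj d (flip v 0) v" using flip_hadj[OF v(1)] assms by simp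
    then have "even (card (flip v 0)) \<noteq> even (card v)" by (rule hadj_parity)
    then have "even (card (flip v 0)) = (\<not> b)" using v(2) by simp
    moreover have "flip v 0 \<in> vertices d" using flip_vertices[OF v(1)] assms by simp
    ultimately show ?thesis unfolding side_def by simp
  qed
  have ff: "flip (flip v 0) 0 = v" for v by (cases "0 \<in> v") (simp_all add: flip_def insert_absorb)
  have bij: "bij_betw (\<lambda>v. flip v 0) (side d True) (side d False)"
  proof (rule bij_betw_byWitness[where f'="\<lambda>v. flip v 0"])
    show "\<forall>a\<in>side d True. flip (flip a 0) 0 = a" using ff by blast
    show "\<forall>a'\<in>side d False. flip (flip a' 0) 0 = a'" using ff by blast
    show "(\<lambda>v. flip v 0) ` side d True \<subseteq> side d False" using fl[of _ True] by (simp add: image_subset_iff)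
    show "(\<lambda>v. flip v 0) ` side d False \<subseteq> side d True" using fl[of _ False] by (simp add: image_subset_iff)
  qed
  have eqc: "card (side d True) = card (side d False)"
    using bij_betw_same_card[OF bij] .
  have un: "vertices d = side d True \<union> side d False" unfolding side_def by auto
  have dj: "side d True \<inter> side d False = {}" unfolding side_def by auto
  have "card (vertices d) = card (side d True) + card (side d False)"
    unfolding un by (rule card_Un_disjoint) (simp_all add: finite_side dj)
  moreover have "card (vertices d) = 2 ^ d" by (simp add: vertices_def card_Pow)
  ultimately have "card (side d b) * 2 = 2 ^ d" using eqc by (cases b) simp_all
  then have "real (card (side d b) * 2) = real (2 ^ d)" by (rule arg_cong)
  then have "real (card (side d b)) * 2 = 2 ^ d" by simp
  then show ?thesis by simp
qed

lemma bern_pow: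
  fixes s a :: real
  assumes "0 \<le> s" "0 \<le> a"
  shows "s ^ Suc k + real (Suc k) * a * s ^ k \<le> (s + a) ^ Suc k"
proof (induction k)
  case 0
  then show ?case by simp
next
  case (Suc k)
  have "s ^ Suc (Suc k) + real (Suc (Suc k)) * a * s ^ Suc k
      = s * (s ^ Suc k + real (Suc k) * a * s ^ k) + a * s ^ Suc k"
    by (simp add: algebra_simps)
  also have "\<dots> \<le> s * (s + a) ^ Suc k + a * (s + a) ^ Suc k"
  proof (rule add_mono)
    show "s * (s ^ Suc k + real (Suc k) * a * s ^ k) \<le> s * (s + a) ^ Suc k"
      using Suc.IH assms by (intro mult_left_mono) auto
    show "a * s ^ Suc k \<le> a * (s + a) ^ Suc k"
      using assms by (intro mult_left_mono power_mono) auto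
  qed
  also have "\<dots> = (s + a) ^ Suc (Suc k)" by (simp add: algebra_simps)
  finally show ?case .
qed

lemma subsets_Suc_decomp:
  assumes "finite F" "x \<notin> F"
  shows "{S. S \<subseteq> insert x F \<and> card S = Suc k} =
         {S. S \<subseteq> F \<and> card S = Suc k} \<union> insert x ` {S. S \<subseteq> F \<and> card S = k}"
proof (rule set_eqI)
  fix S
  show "S \<in> {S. S \<subseteq> insert x F \<and> card S = Suc k} \<longleftrightarrow>
        S \<in> {S. S \<subseteq> F \<and> card S = Suc k} \<union> insert x ` {S. S \<subseteq> F \<and> card S = k}"
  proof
    assume S: "S \<in> {S. S \<subseteq> insert x F \<and> card S = Suc k}"
    then have fS: "finite S" using assms(1) finite_subset by auto
    show "S \<in> {S. S \<subseteq> F \<and> card S = Suc k} \<union> insert x ` {S. S \<subseteq> F \<and> card S = k}"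
    proof (cases "x \<in> S")
      case True
      have "S = insert x (S - {x})" using True by auto
      moreover have "S - {x} \<subseteq> F" using S by auto
      moreover have "card (S - {x}) = k" using S True fS by simp
      ultimately show ?thesis by blast
    next
      case False
      then have "S \<subseteq> F" using S by auto
      then show ?thesis using S by simp
    qed
  next
    assume S: "S \<in> {S. S \<subseteq> F \<and> card S = Suc k} \<union> insert x ` {S. S \<subseteq> F \<and> card S = k}"
    show "S \<in> {S. S \<subseteq> insert x F \<and> card S = Suc k}"
    proof (cases "S \<in> {S. S \<subseteq> F \<and> card S = Suc k}")
      case True
      then show ?thesis by auto
    next
      case False
      then obtain T where T: "T \<subseteq> F" "card T = k" "S = insert x T" using S by auto
      have "finite T" using T(1) assms(1) finite_subset by auto
      moreover have "x \<notin> T" using T(1) assms(2) by auto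
      ultimately show ?thesis using T by auto
    qed
  qed
qed

lemma esym:
  fixes a :: "'a \<Rightarrow> real"
  assumes "finite V" "\<And>v. 0 \<le> a v"
  shows "(\<Sum>S\<in>{S. S \<subseteq> V \<and> card S = m}. \<Prod>v\<in>S. a v) \<le> (\<Sum>v\<in>V. a v) ^ m / fact m"
  using assms(1)
proof (induction V arbitrary: m rule: finite_induct)
  case empty
  show ?case
  proof (cases m)
    case 0
    have e: "{S. S \<subseteq> {} \<and> card S = m} = {{}}" using 0 by auto
    show ?thesis by (subst e) (simp add: 0)
  next
    case (Suc k)
    have "{S. S \<subseteq> ({}::'a set) \<and> card S = m} = {}" using Suc by auto
    then show ?thesis using Suc by simp
  qed
next
  case (insert x F)
  define s where "s = (\<Sum>v\<in>F. a v)"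
  have s0: "0 \<le> s" unfolding s_def using assms(2) by (simp add: sum_nonneg)
  have sins: "(\<Sum>v\<in>insert x F. a v) = s + a x" unfolding s_def using insert by simp
  show ?case
  proof (cases m)
    case 0
    have e: "{S. S \<subseteq> insert x F \<and> card S = m} = {{}}"
    proof (rule set_eqI)
      fix S show "S \<in> {S. S \<subseteq> insert x F \<and> card S = m} \<longleftrightarrow> S \<in> {{}}"
      proof
        assume S: "S \<in> {S. S \<subseteq> insert x F \<and> card S = m}"
        have "finite (insert x F)" using insert(1) by simp
        then have "finite S" using S finite_subset by blast
        then show "S \<in> {{}}" using S 0 by simp
      next
        assume "S \<in> {{}}" then show "S \<in> {S. S \<subseteq> insert x F \<and> card S = m}" using 0 by simp
      qed
    qed
    show ?thesis by (subst e) (simp add: 0)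
  next
    case (Suc k)
    have fin1: "finite {S. S \<subseteq> F \<and> card S = Suc k}" using insert(1) by simp
    have fin2: "finite (insert x ` {S. S \<subseteq> F \<and> card S = k})" using insert(1) by simp
    have disj: "{S. S \<subseteq> F \<and> card S = Suc k} \<inter> insert x ` {S. S \<subseteq> F \<and> card S = k} = {}"
    proof (rule equals0I)
      fix S assume S: "S \<in> {S. S \<subseteq> F \<and> card S = Suc k} \<inter> insert x ` {S. S \<subseteq> F \<and> card S = k}"
      then have "S \<subseteq> F" by simp
      moreover have "x \<in> S" using S by auto
      ultimately show False using insert(2) by blast
    qed
    have inj: "inj_on (insert x) {S. S \<subseteq> F \<and> card S = k}"
    proof (rule inj_onI)
      fix S T assume "S \<in> {S. S \<subseteq> F \<and> card S = k}" "T \<in> {S. S \<subseteq> F \<and> card S = k}"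
        "insert x S = insert x T"
      then have "x \<notin> S" "x \<notin> T" "insert x S = insert x T" using insert(2) by auto
      then show "S = T" by (metis Diff_insert_absorb)
    qed
    have "(\<Sum>S\<in>{S. S \<subseteq> insert x F \<and> card S = m}. \<Prod>v\<in>S. a v)
        = (\<Sum>S\<in>{S. S \<subseteq> F \<and> card S = Suc k}. \<Prod>v\<in>S. a v)
          + (\<Sum>S\<in>insert x ` {S. S \<subseteq> F \<and> card S = k}. \<Prod>v\<in>S. a v)"
      unfolding Suc subsets_Suc_decomp[OF insert(1,2)]
      by (rule sum.union_disjoint[OF fin1 fin2 disj])
    also have "(\<Sum>S\<in>insert x ` {S. S \<subseteq> F \<and> card S = k}. \<Prod>v\<in>S. a v)
        = (\<Sum>T\<in>{S. S \<subseteq> F \<and> card S = k}. \<Prod>v\<in>insert x T. a v)"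
      by (rule sum.reindex[OF inj, unfolded comp_def])
    also have "\<dots> = (\<Sum>T\<in>{S. S \<subseteq> F \<and> card S = k}. a x * (\<Prod>v\<in>T. a v))"
    proof (rule sum.cong)
      fix T assume "T \<in> {S. S \<subseteq> F \<and> card S = k}"
      then have "finite T" "x \<notin> T" using insert(1,2) finite_subset by auto
      then show "(\<Prod>v\<in>insert x T. a v) = a x * (\<Prod>v\<in>T. a v)" by simp
    qed simp
    also have "\<dots> = a x * (\<Sum>T\<in>{S. S \<subseteq> F \<and> card S = k}. \<Prod>v\<in>T. a v)"
      by (simp add: sum_distrib_left)
    finally have eq: "(\<Sum>S\<in>{S. S \<subseteq> insert x F \<and> card S = m}. \<Prod>v\<in>S. a v)
        = (\<Sum>S\<in>{S. S \<subseteq> F \<and> card S = Suc k}. \<Prod>v\<in>S. a v)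
          + a x * (\<Sum>T\<in>{S. S \<subseteq> F \<and> card S = k}. \<Prod>v\<in>T. a v)" .
    have h1: "(\<Sum>S\<in>{S. S \<subseteq> F \<and> card S = Suc k}. \<Prod>v\<in>S. a v) \<le> s ^ Suc k / fact (Suc k)"
      using insert(3)[of "Suc k"] unfolding s_def .
    have h2: "(\<Sum>T\<in>{S. S \<subseteq> F \<and> card S = k}. \<Prod>v\<in>T. a v) \<le> s ^ k / fact k"
      using insert(3)[of k] unfolding s_def .
    have "(\<Sum>S\<in>{S. S \<subseteq> F \<and> card S = Suc k}. \<Prod>v\<in>S. a v)
          + a x * (\<Sum>T\<in>{S. S \<subseteq> F \<and> card S = k}. \<Prod>v\<in>T. a v)
          \<le> s ^ Suc k / fact (Suc k) + a x * (s ^ k / fact k)"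
      by (rule add_mono[OF h1 mult_left_mono[OF h2 assms(2)[of x]]])
    also have "\<dots> = (s ^ Suc k + real (Suc k) * a x * s ^ k) / fact (Suc k)"
    proof -
      have fk: "(fact (Suc k) :: real) = real (Suc k) * fact k" by simp
      have "a x * (s ^ k / fact k) = (real (Suc k) * a x * s ^ k) / fact (Suc k)"
        unfolding fk by (simp del: of_nat_Suc)
      then show ?thesis by (simp add: add_divide_distrib)
    qed
    also have "\<dots> \<le> (s + a x) ^ Suc k / fact (Suc k)"
      using bern_pow[OF s0 assms(2)[of x], of k] by (intro divide_right_mono) auto
    finally show ?thesis using eq sins Suc by simp
  qed
qed

lemma edges_mem: "e \<in> edges d \<longleftrightarrow> (\<exists>x y. e = {x, y} \<and> hadj d x y)"
  unfolding edges_def by (rule mem_Collect_eq)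

lemma edge_vertex: "{u, v} \<in> edges d \<Longrightarrow> u \<in> vertices d"
proof -
  assume "{u, v} \<in> edges d"
  then have "\<exists>x y. {u, v} = {x, y} \<and> hadj d x y" by (simp only: edges_mem)
  then obtain x y where exy: "{u, v} = {x, y} \<and> hadj d x y" by (elim exE) (rule that)
  have "u \<in> {x, y}" using exy by (metis insertI1)
  then have "u = x \<or> u = y" by simp
  moreover have "x \<in> vertices d" "y \<in> vertices d" using exy unfolding hadj_def by simp_all
  ultimately show ?thesis by (elim disjE) simp_all
qed

lemma edge_hadj: "{u, v} \<in> edges d \<Longrightarrow> hadj d v u"
proof -
  assume "{u, v} \<in> edges d"
  then have "\<exists>x y. {u, v} = {x, y} \<and> hadj d x y" by (simp only: edges_mem)
  then obtain x y where exy: "{u, v} = {x, y} \<and> hadj d x y" by (elim exE) (rule that)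
  then have h: "hadj d x y" by simp
  have "(u = x \<and> v = y) \<or> (u = y \<and> v = x)" using exy by (simp only: doubleton_eq_iff)
  then show ?thesis
  proof
    assume "u = x \<and> v = y" then show ?thesis using hadj_sym[OF h] by simp
  next
    assume "u = y \<and> v = x" then show ?thesis using h by simp
  qed
qed

lemma NpS_good:
  assumes S: "S \<in> Good d b m"
  shows "1 / 2 ^ NpS d \<omega> S = (\<Prod>v\<in>S. 1 / 2 ^ Np d \<omega> v :: real)"
proof -
  define Nb where "Nb v = {u. {u, v} \<in> edges d \<and> \<omega> {u, v}}" for v
  have Sside: "S \<subseteq> side d b" using S unfolding Good_def by simp
  have fS: "finite S" by (rule finite_subset[OF Sside finite_side])
  have un: "{u. \<exists>v\<in>S. {u, v} \<in> edges d \<and> \<omega> {u, v}} = (\<Union>v\<in>S. Nb v)"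
    unfolding Nb_def by auto
  have fN: "finite (Nb v)" for v
  proof (rule finite_subset[OF _ finite_vertices])
    show "Nb v \<subseteq> vertices d" unfolding Nb_def by (auto intro: edge_vertex)
  qed
  have dj: "Nb v \<inter> Nb w = {}" if "v \<in> S" "w \<in> S" "v \<noteq> w" for v w
  proof (rule ccontr)
    assume "Nb v \<inter> Nb w \<noteq> {}"
    then obtain u where "u \<in> Nb v" "u \<in> Nb w" by blast
    then have "{u, v} \<in> edges d" "{u, w} \<in> edges d" unfolding Nb_def by simp_all
    then have "hadj d v u" "hadj d w u" by (simp_all add: edge_hadj)
    then have "two_nbrs d v w" unfolding two_nbrs_def by blast
    moreover have "\<forall>u\<in>S. \<forall>v\<in>S. u \<noteq> v \<longrightarrow> \<not> two_nbrs d u v" using S by (simp add: Good_def)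
    ultimately show False using that by blast
  qed
  have "NpS d \<omega> S = card (\<Union>v\<in>S. Nb v)" unfolding NpS_def un ..
  also have "\<dots> = (\<Sum>v\<in>S. card (Nb v))"
    by (rule card_UN_disjoint[OF fS]) (use fN dj in auto)
  also have "\<dots> = (\<Sum>v\<in>S. Np d \<omega> v)" unfolding Np_def Nb_def ..
  finally have "NpS d \<omega> S = (\<Sum>v\<in>S. Np d \<omega> v)" .
  then have "(1/2::real) ^ NpS d \<omega> S = (\<Prod>v\<in>S. (1/2) ^ Np d \<omega> v)"
    by (simp add: power_sum)
  then show ?thesis by (simp add: power_one_over)
qed

lemma good_sum_le:
  fixes f :: "nat set \<Rightarrow> real"
  assumes "\<And>v. f v = 1 / 2 ^ Np d \<omega> v"
  shows "(\<Sum>S\<in>Good d b m. 1 / 2 ^ NpS d \<omega> S :: real) \<le> (\<Sum>v\<in>side d b. f v) ^ m / fact m"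
proof -
  have sub: "Good d b m \<subseteq> {S. S \<subseteq> side d b \<and> card S = m}" by (auto simp: Good_def)
  have fin: "finite {S. S \<subseteq> side d b \<and> card S = m}" using finite_side by simp
  have "(\<Sum>S\<in>Good d b m. 1 / 2 ^ NpS d \<omega> S :: real) = (\<Sum>S\<in>Good d b m. \<Prod>v\<in>S. f v)"
    using NpS_good assms by (intro sum.cong) auto
  also have "\<dots> \<le> (\<Sum>S\<in>{S. S \<subseteq> side d b \<and> card S = m}. \<Prod>v\<in>S. f v)"
    using assms by (intro sum_mono2[OF fin sub] prod_nonneg) auto
  also have "\<dots> \<le> (\<Sum>v\<in>side d b. f v) ^ m / fact m"
    using assms by (intro esym finite_side) auto
  finally show ?thesis .
qed

definition fv :: "nat \<Rightarrow> (nat set set \<Rightarrow> bool) \<Rightarrow> nat set \<Rightarrow> real" where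
  "fv d \<omega> v = 1 / 2 ^ Np d \<omega> v"

definition G :: "nat set \<Rightarrow> nat set set \<Rightarrow> bool \<Rightarrow> real" where
  "G v e b = (if v \<in> e \<and> b then 1/2 else 1)"

lemma fv_nonneg: "0 \<le> fv d \<omega> v"
  by (simp add: fv_def)

lemma fv_le1: "fv d \<omega> v \<le> 1"
  by (simp add: fv_def)

lemma fv_prod: "fv d \<omega> v = (\<Prod>e\<in>edges d. G v e (\<omega> e))"
proof -
  have "(\<Prod>e\<in>edges d. G v e (\<omega> e)) = (\<Prod>e\<in>edges d. if v \<in> e \<and> \<omega> e then 1/2 else 1)"
    unfolding G_def ..
  also have "\<dots> = (\<Prod>e\<in>{e \<in> edges d. v \<in> e \<and> \<omega> e}. 1/2)"
    by (rule prod.inter_filter[symmetric, OF finite_edges])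
  also have "\<dots> = (1/2) ^ Np d \<omega> v" by (simp add: Np_eq)
  finally show ?thesis by (simp add: fv_def power_one_over)
qed

lemma finite_set_Qdp: "finite (set_pmf (Qdp d p))"
proof -
  have "set_pmf (Qdp d p) \<subseteq> PiE_dflt (edges d) False (set_pmf \<circ> (\<lambda>_. bernoulli_pmf p))"
    unfolding Qdp_def by (rule set_Pi_pmf_subset'[OF finite_edges])
  moreover have "finite (PiE_dflt (edges d) False (set_pmf \<circ> (\<lambda>_. bernoulli_pmf p)))"
    by (rule finite_PiE_dflt[OF finite_edges]) (rule finite_subset[OF subset_UNIV], simp)
  ultimately show ?thesis by (rule finite_subset)
qed

lemma integ: "integrable (measure_pmf (Qdp d p)) (f :: _ \<Rightarrow> real)"
  by (rule integrable_measure_pmf_finite[OF finite_set_Qdp])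

lemma E_prod:
  assumes p: "0 \<le> p" "p \<le> 1" and h: "\<And>e b. 0 \<le> h e b"
  shows "measure_pmf.expectation (Qdp d p) (\<lambda>\<omega>. \<Prod>e\<in>edges d. h e (\<omega> e))
         = (\<Prod>e\<in>edges d. h e True * p + h e False * (1 - p))"
proof -
  have "measure_pmf.expectation (Qdp d p) (\<lambda>\<omega>. \<Prod>e\<in>edges d. h e (\<omega> e))
     = (\<Prod>e\<in>edges d. measure_pmf.expectation (bernoulli_pmf p) (\<lambda>b. h e b))"
    unfolding Qdp_def
  proof (rule expectation_prod_Pi_pmf[OF finite_edges])
    fix e
    show "integrable (measure_pmf (bernoulli_pmf p)) (h e)"
      by (rule integrable_measure_pmf_finite) (rule finite_subset[OF subset_UNIV], simp)
  qed (rule h)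
  also have "\<dots> = (\<Prod>e\<in>edges d. h e True * p + h e False * (1 - p))"
    using p by simp
  finally show ?thesis .
qed

definition deg :: "nat \<Rightarrow> nat set \<Rightarrow> nat" where
  "deg d v = card {e \<in> edges d. v \<in> e}"

lemma prod_if_pow:
  "(\<Prod>e\<in>edges d. if v \<in> e then c else 1) = (c::real) ^ deg d v"
proof -
  have "(\<Prod>e\<in>edges d. if v \<in> e then c else 1) = (\<Prod>e\<in>{e \<in> edges d. v \<in> e}. c)"
    by (rule prod.inter_filter[symmetric, OF finite_edges])
  then show ?thesis by (simp add: deg_def)
qed

lemma E_fv:
  assumes p: "0 \<le> p" "p \<le> 1"
  shows "measure_pmf.expectation (Qdp d p) (\<lambda>\<omega>. fv d \<omega> v) = (1 - p/2) ^ deg d v"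
proof -
  have "measure_pmf.expectation (Qdp d p) (\<lambda>\<omega>. fv d \<omega> v)
      = measure_pmf.expectation (Qdp d p) (\<lambda>\<omega>. \<Prod>e\<in>edges d. G v e (\<omega> e))"
    by (simp only: fv_prod)
  also have "\<dots> = (\<Prod>e\<in>edges d. G v e True * p + G v e False * (1 - p))"
    by (rule E_prod[OF p]) (simp add: G_def)
  also have "\<dots> = (\<Prod>e\<in>edges d. if v \<in> e then 1 - p/2 else 1)"
    by (rule prod.cong) (auto simp: G_def algebra_simps)
  also have "\<dots> = (1 - p/2) ^ deg d v" by (rule prod_if_pow)
  finally show ?thesis .
qed

lemma E_fv2:
  assumes p: "0 \<le> p" "p \<le> 1"
  shows "measure_pmf.expectation (Qdp d p) (\<lambda>\<omega>. fv d \<omega> v * fv d \<omega> v) = (1 - 3*p/4) ^ deg d v"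
proof -
  have "measure_pmf.expectation (Qdp d p) (\<lambda>\<omega>. fv d \<omega> v * fv d \<omega> v)
      = measure_pmf.expectation (Qdp d p) (\<lambda>\<omega>. \<Prod>e\<in>edges d. G v e (\<omega> e) * G v e (\<omega> e))"
    by (simp only: fv_prod prod.distrib)
  also have "\<dots> = (\<Prod>e\<in>edges d. G v e True * G v e True * p + G v e False * G v e False * (1 - p))"
    by (rule E_prod[OF p]) (simp add: G_def)
  also have "\<dots> = (\<Prod>e\<in>edges d. if v \<in> e then 1 - 3*p/4 else 1)"
    by (rule prod.cong) (auto simp: G_def algebra_simps)
  also have "\<dots> = (1 - 3*p/4) ^ deg d v" by (rule prod_if_pow)
  finally show ?thesis .
qed

lemma E_fvw:
  assumes p: "0 \<le> p" "p \<le> 1" and vw: "v \<in> side d b" "w \<in> side d b" "v \<noteq> w"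
  shows "measure_pmf.expectation (Qdp d p) (\<lambda>\<omega>. fv d \<omega> v * fv d \<omega> w)
       = (1 - p/2) ^ deg d v * (1 - p/2) ^ deg d w"
proof -
  have "measure_pmf.expectation (Qdp d p) (\<lambda>\<omega>. fv d \<omega> v * fv d \<omega> w)
      = measure_pmf.expectation (Qdp d p) (\<lambda>\<omega>. \<Prod>e\<in>edges d. G v e (\<omega> e) * G w e (\<omega> e))"
    by (simp only: fv_prod prod.distrib)
  also have "\<dots> = (\<Prod>e\<in>edges d. G v e True * G w e True * p + G v e False * G w e False * (1 - p))"
    by (rule E_prod[OF p]) (simp add: G_def)
  also have "\<dots> = (\<Prod>e\<in>edges d. (if v \<in> e then 1 - p/2 else 1) * (if w \<in> e then 1 - p/2 else 1))"
  proof (rule prod.cong)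
    fix e assume e: "e \<in> edges d"
    have "\<not> (v \<in> e \<and> w \<in> e)" by (rule no_common_edge[OF vw e])
    then show "G v e True * G w e True * p + G v e False * G w e False * (1 - p)
        = (if v \<in> e then 1 - p/2 else 1) * (if w \<in> e then 1 - p/2 else 1)"
      by (cases "v \<in> e"; cases "w \<in> e") (simp_all add: G_def algebra_simps)
  qed simp
  also have "\<dots> = (1 - p/2) ^ deg d v * (1 - p/2) ^ deg d w"
    by (simp only: prod.distrib prod_if_pow)
  finally show ?thesis .
qed

lemma Phi_fv: "Phi d b \<omega> = (\<Sum>v\<in>side d b. fv d \<omega> v)"
  by (simp add: Phi_def fv_def)

lemma deg_ge': "v \<in> side d b \<Longrightarrow> d \<le> deg d v"
  unfolding deg_def using side_vertices deg_ge by blast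

lemma E_Phi:
  assumes p: "0 \<le> p" "p \<le> 1"
  shows "measure_pmf.expectation (Qdp d p) (Phi d b) = (\<Sum>v\<in>side d b. (1 - p/2) ^ deg d v)"
proof -
  have PP: "Phi d b = (\<lambda>\<omega>. \<Sum>v\<in>side d b. fv d \<omega> v)"
    by (rule ext) (rule Phi_fv)
  have "measure_pmf.expectation (Qdp d p) (Phi d b)
      = measure_pmf.expectation (Qdp d p) (\<lambda>\<omega>. \<Sum>v\<in>side d b. fv d \<omega> v)"
    by (simp only: PP)
  also have "\<dots> = (\<Sum>v\<in>side d b. measure_pmf.expectation (Qdp d p) (\<lambda>\<omega>. fv d \<omega> v))"
    by (rule Bochner_Integration.integral_sum) (rule integ)
  also have "\<dots> = (\<Sum>v\<in>side d b. (1 - p/2) ^ deg d v)"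
    by (rule sum.cong) (simp_all add: E_fv[OF p])
  finally show ?thesis .
qed

lemma E_Phi_le:
  assumes p: "0 \<le> p" "p \<le> 1" and d: "d \<ge> 1"
  shows "measure_pmf.expectation (Qdp d p) (Phi d b) \<le> mu p d"
proof -
  have "(\<Sum>v\<in>side d b. (1 - p/2) ^ deg d v) \<le> (\<Sum>v\<in>side d b. (1 - p/2) ^ d)"
    by (rule sum_mono, rule power_decreasing) (use p deg_ge' in auto)
  also have "\<dots> = real (card (side d b)) * (1 - p/2) ^ d" by simp
  also have "\<dots> \<le> 2 ^ d / 2 * (1 - p/2) ^ d"
    by (rule mult_right_mono[OF card_side[OF d]]) (use p in simp)
  also have "\<dots> = mu p d"
    unfolding mu_def by (simp add: power_mult_distrib[symmetric] algebra_simps)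
  finally show ?thesis using E_Phi[OF p] by simp
qed

lemma E_Phi2_le:
  assumes p: "0 \<le> p" "p \<le> 1"
  shows "measure_pmf.expectation (Qdp d p) (\<lambda>\<omega>. (Phi d b \<omega>)\<^sup>2)
     \<le> (\<Sum>v\<in>side d b. (1 - 3*p/4) ^ deg d v) + (measure_pmf.expectation (Qdp d p) (Phi d b))\<^sup>2"
proof -
  define a where "a v = (1 - p/2) ^ deg d v" for v
  define c where "c v = (1 - 3*p/4) ^ deg d v" for v
  have a0: "0 \<le> a v" for v unfolding a_def using p by simp
  have sq: "(Phi d b \<omega>)\<^sup>2 = (\<Sum>v\<in>side d b. \<Sum>w\<in>side d b. fv d \<omega> v * fv d \<omega> w)" for \<omega>
    unfolding Phi_fv power2_eq_square by (rule sum_product)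
  have "measure_pmf.expectation (Qdp d p) (\<lambda>\<omega>. (Phi d b \<omega>)\<^sup>2)
     = (\<Sum>v\<in>side d b. \<Sum>w\<in>side d b. measure_pmf.expectation (Qdp d p) (\<lambda>\<omega>. fv d \<omega> v * fv d \<omega> w))"
    unfolding sq
    by (subst Bochner_Integration.integral_sum, rule integ,
        rule sum.cong, rule refl, rule Bochner_Integration.integral_sum, rule integ)
  also have "\<dots> \<le> (\<Sum>v\<in>side d b. c v + (\<Sum>w\<in>side d b. a v * a w))"
  proof (rule sum_mono)
    fix v assume v: "v \<in> side d b"
    have "(\<Sum>w\<in>side d b. measure_pmf.expectation (Qdp d p) (\<lambda>\<omega>. fv d \<omega> v * fv d \<omega> w))
      = measure_pmf.expectation (Qdp d p) (\<lambda>\<omega>. fv d \<omega> v * fv d \<omega> v)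
        + (\<Sum>w\<in>side d b - {v}. measure_pmf.expectation (Qdp d p) (\<lambda>\<omega>. fv d \<omega> v * fv d \<omega> w))"
      by (rule sum.remove[OF finite_side v])
    also have "\<dots> = c v + (\<Sum>w\<in>side d b - {v}. a v * a w)"
    proof -
      have "(\<Sum>w\<in>side d b - {v}. measure_pmf.expectation (Qdp d p) (\<lambda>\<omega>. fv d \<omega> v * fv d \<omega> w))
          = (\<Sum>w\<in>side d b - {v}. a v * a w)"
      proof (rule sum.cong)
        fix w assume "w \<in> side d b - {v}"
        then have "w \<in> side d b" "v \<noteq> w" by auto
        then show "measure_pmf.expectation (Qdp d p) (\<lambda>\<omega>. fv d \<omega> v * fv d \<omega> w) = a v * a w"
          unfolding a_def by (rule E_fvw[OF p v])
      qed simp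
      moreover have "measure_pmf.expectation (Qdp d p) (\<lambda>\<omega>. fv d \<omega> v * fv d \<omega> v) = c v"
        unfolding c_def by (rule E_fv2[OF p])
      ultimately show ?thesis by simp
    qed
    also have "\<dots> \<le> c v + (\<Sum>w\<in>side d b. a v * a w)"
      using a0 by (intro add_left_mono sum_mono2 finite_side mult_nonneg_nonneg) auto
    finally show "(\<Sum>w\<in>side d b. measure_pmf.expectation (Qdp d p) (\<lambda>\<omega>. fv d \<omega> v * fv d \<omega> w))
        \<le> c v + (\<Sum>w\<in>side d b. a v * a w)" .
  qed
  also have "\<dots> = (\<Sum>v\<in>side d b. c v) + (\<Sum>v\<in>side d b. a v)\<^sup>2"
    by (simp add: sum.distrib power2_eq_square sum_product)
  also have "(\<Sum>v\<in>side d b. a v) = measure_pmf.expectation (Qdp d p) (Phi d b)"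
    unfolding a_def by (rule E_Phi[OF p, symmetric])
  finally show ?thesis unfolding c_def .
qed

lemma var_Phi_le:
  assumes p: "2/3 \<le> p" "p \<le> 1" and d: "d \<ge> 1"
  shows "measure_pmf.variance (Qdp d p) (Phi d b) \<le> 1/2"
proof -
  have p': "0 \<le> p" "p \<le> 1" using p by auto
  have "measure_pmf.variance (Qdp d p) (Phi d b)
      = measure_pmf.expectation (Qdp d p) (\<lambda>\<omega>. (Phi d b \<omega>)\<^sup>2) - (measure_pmf.expectation (Qdp d p) (Phi d b))\<^sup>2"
    by (rule measure_pmf.variance_eq) (rule integ)+
  also have "\<dots> \<le> (\<Sum>v\<in>side d b. (1 - 3*p/4) ^ deg d v)"
    using E_Phi2_le[OF p', of d b] by linarith
  also have "\<dots> \<le> (\<Sum>v\<in>side d b. (1 - 3*p/4) ^ d)"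
    by (rule sum_mono, rule power_decreasing) (use p deg_ge' in auto)
  also have "\<dots> = real (card (side d b)) * (1 - 3*p/4) ^ d" by simp
  also have "\<dots> \<le> 2 ^ d / 2 * (1 - 3*p/4) ^ d"
    by (rule mult_right_mono[OF card_side[OF d]]) (use p in simp)
  also have "\<dots> = (2 - 3*p/2) ^ d / 2"
    by (simp add: power_mult_distrib[symmetric] algebra_simps)
  also have "\<dots> \<le> 1 / 2"
    using p by (simp add: power_le_one)
  finally show ?thesis .
qed

lemma prob_Phi_large:
  assumes p: "2/3 \<le> p" "p \<le> 1" and d: "d \<ge> 1" and eta: "\<eta> > 0"
  shows "measure_pmf.prob (Qdp d p) {\<omega>. Phi d b \<omega> > mu p d + \<eta>} \<le> 1 / (2 * \<eta>\<^sup>2)"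
proof -
  have p': "0 \<le> p" "p \<le> 1" using p by auto
  let ?E = "measure_pmf.expectation (Qdp d p) (Phi d b)"
  have EP: "?E \<le> mu p d" by (rule E_Phi_le[OF p' d])
  have "{\<omega>. Phi d b \<omega> > mu p d + \<eta>} \<subseteq> {\<omega> \<in> space (measure_pmf (Qdp d p)). \<eta> \<le> \<bar>Phi d b \<omega> - ?E\<bar>}"
    using EP by auto
  then have "measure_pmf.prob (Qdp d p) {\<omega>. Phi d b \<omega> > mu p d + \<eta>}
      \<le> measure_pmf.prob (Qdp d p) {\<omega> \<in> space (measure_pmf (Qdp d p)). \<eta> \<le> \<bar>Phi d b \<omega> - ?E\<bar>}"
    by (intro measure_pmf.finite_measure_mono) simp_all
  also have "\<dots> \<le> measure_pmf.variance (Qdp d p) (Phi d b) / \<eta>\<^sup>2"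
    by (rule measure_pmf.Chebyshev_inequality) (simp_all add: integ eta)
  also have "\<dots> \<le> (1/2) / \<eta>\<^sup>2"
    by (rule divide_right_mono[OF var_Phi_le[OF p d]]) simp
  finally show ?thesis by simp
qed

lemma exp_sums_real: "(\<lambda>n. y ^ n / fact n) sums exp (y::real)"
proof -
  have "(\<lambda>n. y ^ n / fact n) = (\<lambda>n. y ^ n /\<^sub>R fact n)"
    by (rule ext) (simp add: divide_inverse mult.commute)
  then show ?thesis using exp_converges[of y] by simp
qed

lemma exp_neg_upper: "0 \<le> (s::real) \<Longrightarrow> exp (- s) \<le> 1 - s + s\<^sup>2"
proof -
  assume s: "0 \<le> s"
  have "1 + s \<le> exp s" by (rule exp_ge_add_one_self)
  moreover have "1 \<le> (1 + s) * (1 - s + s\<^sup>2)"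
    using s by (simp add: algebra_simps power2_eq_square power3_eq_cube)
  moreover have "0 < 1 - s + s\<^sup>2"
  proof -
    have "0 < (s - 1/2)\<^sup>2 + 3/4" by (simp add: add_nonneg_pos)
    then show ?thesis by (simp add: power2_eq_square algebra_simps)
  qed
  ultimately have "1 \<le> exp s * (1 - s + s\<^sup>2)"
    by (meson order_trans mult_right_mono less_imp_le)
  then show ?thesis by (simp add: exp_minus field_simps)
qed

lemma tail_bound:
  fixes \<mu> \<Phi> :: real
  assumes mu: "\<mu> \<ge> 2" and P0: "0 \<le> \<Phi>" and Pu: "\<Phi> \<le> \<mu> + \<mu> powr 0.2 / 16"
  defines "t \<equiv> (\<lambda>m. if \<not> \<bar>real m - \<mu>\<bar> \<le> \<mu> powr 0.6 then \<Phi> ^ m / fact m else 0)"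
  shows "summable t \<and> suminf t \<le> 2 * exp (\<mu> - \<mu> powr 0.2 / 8)"
proof -
  define x where "x = \<mu> powr (-0.4)"
  define s where "s = x / 2"
  define r where "r = \<mu> powr 0.2"
  define \<eta> where "\<eta> = r / 16"
  have mu0: "0 < \<mu>" using mu by simp
  have x0: "0 < x" unfolding x_def using mu0 by simp
  have x1: "x < 1" unfolding x_def using mu by (intro powr_less_one) auto
  have s0: "0 \<le> s" and s1: "s \<le> 1" using x0 x1 unfolding s_def by auto
  have a_eq: "\<mu> powr 0.6 = \<mu> * x"
  proof -
    have "\<mu> * x = \<mu> powr 1 * \<mu> powr (-0.4)" unfolding x_def using mu0 by simp
    also have "\<dots> = \<mu> powr (1 + (-0.4))" by (rule powr_add[symmetric])
    also have "\<dots> = \<mu> powr 0.6" by simp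
    finally show ?thesis by simp
  qed
  have r_eq: "r = \<mu> * x\<^sup>2"
  proof -
    have "\<mu> * x\<^sup>2 = \<mu> powr 1 * \<mu> powr (-0.4) * \<mu> powr (-0.4)"
      unfolding x_def using mu0 by (simp add: power2_eq_square)
    also have "\<dots> = \<mu> powr (1 + (-0.4) + (-0.4))" by (simp only: powr_add[symmetric])
    also have "\<dots> = r" unfolding r_def by simp
    finally show ?thesis by simp
  qed
  have rs: "s\<^sup>2 * \<mu> = r / 4" unfolding r_eq s_def by (simp add: power2_eq_square)
  define A where "A = exp (- (s * (\<mu> + \<mu> * x)))"
  define B where "B = exp (s * (\<mu> - \<mu> * x))"
  define u where "u = (\<lambda>m. (exp s * \<Phi>) ^ m / fact m * A + (exp (-s) * \<Phi>) ^ m / fact m * B)"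
  have u_sums: "u sums (exp (exp s * \<Phi>) * A + exp (exp (-s) * \<Phi>) * B)"
    unfolding u_def by (intro sums_add sums_mult2 exp_sums_real)
  have t0: "0 \<le> t m" for m unfolding t_def using P0 by simp
  have tu: "t m \<le> u m" for m
  proof (cases "\<bar>real m - \<mu>\<bar> \<le> \<mu> powr 0.6")
    case True
    then have "t m = 0" unfolding t_def by simp
    moreover have "0 \<le> u m" unfolding u_def A_def B_def using P0 by simp
    ultimately show ?thesis by simp
  next
    case False
    then have tm: "t m = \<Phi> ^ m / fact m" unfolding t_def by simp
    have pm0: "0 \<le> \<Phi> ^ m / fact m" using P0 by simp
    have en: "exp (c * real m) * \<Phi> ^ m = (exp c * \<Phi>) ^ m" for c
      by (simp add: power_mult_distrib exp_of_nat_mult[symmetric] mult.commute)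
    show ?thesis
    proof (cases "real m > \<mu>")
      case True
      then have m1: "real m \<ge> \<mu> + \<mu> * x" using False a_eq by simp
      have "1 \<le> exp (s * real m) * A"
        unfolding A_def exp_add[symmetric] using mult_left_mono[OF m1 s0] by (simp add: algebra_simps)
      then have "\<Phi> ^ m / fact m \<le> \<Phi> ^ m / fact m * (exp (s * real m) * A)"
        using mult_left_mono[OF _ pm0] by fastforce
      also have "\<dots> = (exp s * \<Phi>) ^ m / fact m * A"
        using en[of s] by (simp add: algebra_simps)
      also have "\<dots> \<le> u m" unfolding u_def B_def using P0 by simp
      finally show ?thesis using tm by simp
    next
      case False': False
      then have m1: "real m \<le> \<mu> - \<mu> * x" using False a_eq by simp
      have "1 \<le> exp ((-s) * real m) * B"
        unfolding B_def exp_add[symmetric] using mult_left_mono[OF m1 s0] by (simp add: algebra_simps)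
      then have "\<Phi> ^ m / fact m \<le> \<Phi> ^ m / fact m * (exp ((-s) * real m) * B)"
        using mult_left_mono[OF _ pm0] by fastforce
      also have "\<dots> = (exp (-s) * \<Phi>) ^ m / fact m * B"
        using en[of "-s"] by (simp add: algebra_simps)
      also have "\<dots> \<le> u m" unfolding u_def A_def using P0 by simp
      finally show ?thesis using tm by simp
    qed
  qed
  have summ: "summable t"
    by (rule summable_comparison_test'[OF sums_summable[OF u_sums]]) (use t0 tu in auto)
  have "suminf t \<le> suminf u"
    by (rule suminf_le[OF tu summ sums_summable[OF u_sums]])
  also have "suminf u = exp (exp s * \<Phi>) * A + exp (exp (-s) * \<Phi>) * B"
    using u_sums by (rule sums_unique[symmetric])
  also have "\<dots> \<le> exp (\<mu> - r / 8) + exp (\<mu> - r / 8)"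
  proof (rule add_mono)
    have es: "exp s \<le> 1 + s + s\<^sup>2" by (rule exp_bound[OF s0 s1])
    have es2: "exp s \<le> 2"
    proof -
      have sh: "s \<le> 1/2" using x1 unfolding s_def by simp
      have "s * s \<le> s * (1/2)" using mult_left_mono[OF sh s0] .
      then have "1 + s + s\<^sup>2 \<le> 2" using sh by (simp add: power2_eq_square)
      then show ?thesis using es by simp
    qed
    have "exp s * \<Phi> \<le> exp s * (\<mu> + \<eta>)" using Pu unfolding \<eta>_def r_def by (simp)
    also have "\<dots> = exp s * \<mu> + exp s * \<eta>" by (simp add: algebra_simps)
    also have "\<dots> \<le> (1 + s + s\<^sup>2) * \<mu> + 2 * \<eta>"
      using es es2 mu0 unfolding \<eta>_def r_def by (intro add_mono mult_right_mono) auto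
    finally have "exp s * \<Phi> - s * (\<mu> + \<mu> * x) \<le> (1 + s + s\<^sup>2) * \<mu> + 2 * \<eta> - s * (\<mu> + \<mu> * x)"
      by simp
    also have "\<dots> = \<mu> - s\<^sup>2 * \<mu> + 2 * \<eta>" unfolding s_def by (simp add: algebra_simps power2_eq_square)
    also have "\<dots> = \<mu> - r / 8" unfolding rs \<eta>_def by simp
    finally have "exp s * \<Phi> - s * (\<mu> + \<mu> * x) \<le> \<mu> - r / 8" .
    then show "exp (exp s * \<Phi>) * A \<le> exp (\<mu> - r / 8)"
      unfolding A_def exp_add[symmetric] by simp
  next
    have en: "exp (-s) \<le> 1 - s + s\<^sup>2" by (rule exp_neg_upper[OF s0])
    have en1: "exp (-s) \<le> 1" using s0 by simp
    have "exp (-s) * \<Phi> \<le> exp (-s) * (\<mu> + \<eta>)" using Pu unfolding \<eta>_def r_def by simp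
    also have "\<dots> = exp (-s) * \<mu> + exp (-s) * \<eta>" by (simp add: algebra_simps)
    also have "\<dots> \<le> (1 - s + s\<^sup>2) * \<mu> + \<eta>"
      using en en1 mu0 unfolding \<eta>_def r_def by (intro add_mono mult_right_mono) auto
    finally have "exp (-s) * \<Phi> + s * (\<mu> - \<mu> * x) \<le> (1 - s + s\<^sup>2) * \<mu> + \<eta> + s * (\<mu> - \<mu> * x)"
      by simp
    also have "\<dots> = \<mu> - s\<^sup>2 * \<mu> + \<eta>" unfolding s_def power2_eq_square by (simp add: field_simps)
    also have "\<dots> \<le> \<mu> - r / 8" unfolding rs \<eta>_def using mu0 unfolding r_def by simp
    finally have "exp (-s) * \<Phi> + s * (\<mu> - \<mu> * x) \<le> \<mu> - r / 8" .
    then show "exp (exp (-s) * \<Phi>) * B \<le> exp (\<mu> - r / 8)"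
      unfolding B_def exp_add[symmetric] by simp
  qed
  finally show ?thesis using summ unfolding r_def by simp
qed

lemma mu_exp: "p < 1 \<Longrightarrow> mu p d = 1/2 * exp (real d * ln (2 - p))"
  unfolding mu_def by (simp add: exp_of_nat_mult)

lemma sigma_exp: "p < 4/3 \<Longrightarrow> sigma p d = sqrt (1/2 * exp (real d * ln ((4 - 3*p)/2)))"
  unfolding sigma_def by (simp add: exp_of_nat_mult)

lemma sigma_pos: "p < 4/3 \<Longrightarrow> 0 < sigma p d"
  unfolding sigma_def by simp

lemma asym:
  fixes p \<epsilon> :: real
  assumes p: "2/3 \<le> p" "p < 1" and e: "\<epsilon> > 0"
  shows "eventually (\<lambda>d. 1 \<le> d \<and> 2 \<le> mu p d \<and> 2 * exp (- (mu p d powr 0.2 / 8)) \<le> \<epsilon> * sigma p d) sequentially"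
proof -
  define L where "L = ln (2 - p)"
  define Q where "Q = ln ((4 - 3*p)/2)"
  have L0: "L > 0" unfolding L_def using p by simp
  have ev1: "eventually (\<lambda>d::nat. 1 \<le> d) sequentially" by (rule eventually_ge_at_top)
  have fl: "filterlim (\<lambda>d::nat. 1/2 * exp (real d * L)) at_top sequentially"
    using L0 by real_asymp
  have "\<forall>Z. eventually (\<lambda>d. Z \<le> 1/2 * exp (real d * L)) sequentially"
    using fl by (simp add: filterlim_at_top)
  then have "eventually (\<lambda>d. 2 \<le> 1/2 * exp (real d * L)) sequentially" by blast
  moreover have me: "mu p d = 1/2 * exp (real d * L)" for d
    using mu_exp[OF p(2)] unfolding L_def .
  ultimately have ev2: "eventually (\<lambda>d. 2 \<le> mu p d) sequentially" by (simp only: me)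
  have fl3: "filterlim (\<lambda>d::nat. (1/2 * exp (real d * L)) powr 0.2 / 8 + ln \<epsilon> + (ln (1/2) + real d * Q) / 2 - ln 2) at_top sequentially"
    using L0 e by real_asymp
  have "\<forall>Z. eventually (\<lambda>d. Z \<le> (1/2 * exp (real d * L)) powr 0.2 / 8 + ln \<epsilon> + (ln (1/2) + real d * Q) / 2 - ln 2) sequentially"
    using fl3 by (simp add: filterlim_at_top)
  then have ev3': "eventually (\<lambda>d. 0 \<le> (1/2 * exp (real d * L)) powr 0.2 / 8 + ln \<epsilon> + (ln (1/2) + real d * Q) / 2 - ln 2) sequentially"
    by blast
  have ev3: "eventually (\<lambda>d. 2 * exp (- (mu p d powr 0.2 / 8)) \<le> \<epsilon> * sigma p d) sequentially"
    using ev3'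
  proof (rule eventually_mono)
    fix d :: nat
    assume h: "0 \<le> (1/2 * exp (real d * L)) powr 0.2 / 8 + ln \<epsilon> + (ln (1/2) + real d * Q) / 2 - ln 2"
    define r where "r = mu p d powr 0.2"
    have rr: "(1/2 * exp (real d * L)) powr 0.2 = r" unfolding r_def me ..
    have ls: "ln (sigma p d) = (ln (1/2) + real d * Q) / 2"
    proof -
      have se: "sigma p d = sqrt (1/2 * exp (real d * Q))" unfolding Q_def by (rule sigma_exp) (use p in simp)
      have "ln (sigma p d) = ln (1/2 * exp (real d * Q)) / 2"
        unfolding se by (rule ln_sqrt) simp
      also have "\<dots> = (ln (1/2) + real d * Q) / 2"
      proof -
        have "ln (1/2 * exp (real d * Q)) = ln (1/2) + ln (exp (real d * Q))"
          by (rule ln_mult_pos) simp_all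
        then show ?thesis by simp
      qed
      finally show ?thesis .
    qed
    have "ln 2 - r / 8 \<le> ln \<epsilon> + ln (sigma p d)" using h unfolding rr ls by simp
    then have "exp (ln 2 - r / 8) \<le> exp (ln \<epsilon> + ln (sigma p d))" by (simp only: exp_le_cancel_iff)
    moreover have "exp (ln 2 - r / 8) = 2 * exp (- (r / 8))"
    proof -
      have "exp (ln 2 - r / 8) = exp (ln 2) * exp (- (r / 8))"
        by (simp only: diff_conv_add_uminus exp_add)
      then show ?thesis by simp
    qed
    ultimately have "2 * exp (- (r / 8)) \<le> exp (ln \<epsilon> + ln (sigma p d))" by simp
    also have "\<dots> = \<epsilon> * sigma p d" using e sigma_pos[of p d] p by (simp add: exp_add)
    finally show "2 * exp (- (mu p d powr 0.2 / 8)) \<le> \<epsilon> * sigma p d"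
      unfolding r_def .
  qed
  show ?thesis using ev1 ev2 ev3 by (simp add: eventually_conj_iff)
qed

lemma lim_bound:
  fixes p :: real
  assumes p: "2/3 \<le> p" "p < 1"
  shows "(\<lambda>d. 128 / (mu p d powr 0.2)\<^sup>2) \<longlonglongrightarrow> 0"
proof -
  define L where "L = ln (2 - p)"
  have L0: "L > 0" unfolding L_def using p by simp
  have "(\<lambda>d::nat. 128 / ((1/2 * exp (real d * L)) powr 0.2)\<^sup>2) \<longlonglongrightarrow> 0"
    using L0 by real_asymp
  moreover have me: "mu p d = 1/2 * exp (real d * L)" for d
    using mu_exp[OF p(2)] unfolding L_def .
  moreover have "(\<lambda>d. 128 / (mu p d powr 0.2)\<^sup>2) = (\<lambda>d::nat. 128 / ((1/2 * exp (real d * L)) powr 0.2)\<^sup>2)"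
    by (simp only: me)
  ultimately show ?thesis by simp
qed

lemma key_event:
  fixes p \<epsilon> :: real
  assumes p: "2/3 \<le> p" "p < 1" and e: "\<epsilon> > 0"
    and d: "2 \<le> mu p d" "2 * exp (- (mu p d powr 0.2 / 8)) \<le> \<epsilon> * sigma p d"
    and P: "Phi d b \<omega> \<le> mu p d + mu p d powr 0.2 / 16"
  shows "\<bar>X1 p d b \<omega>\<bar> \<le> \<epsilon> \<and> \<bar>X2 p d b \<omega>\<bar> \<le> \<epsilon>"
proof -
  define \<mu> where "\<mu> = mu p d"
  define \<Phi> where "\<Phi> = Phi d b \<omega>"
  define t where "t = (\<lambda>m. if \<not> \<bar>real m - \<mu>\<bar> \<le> \<mu> powr 0.6 then \<Phi> ^ m / fact m else 0)"
  define t2 where "t2 = (\<lambda>m. if m \<notin> Window p d then (\<Sum>S\<in>Good d b m. 1 / 2 ^ NpS d \<omega> S) else (0::real))"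
  have P0: "0 \<le> \<Phi>" unfolding \<Phi>_def Phi_def by (simp add: sum_nonneg)
  have tb: "summable t \<and> suminf t \<le> 2 * exp (\<mu> - \<mu> powr 0.2 / 8)"
    unfolding t_def by (rule tail_bound) (use d P P0 in \<open>simp_all add: \<mu>_def \<Phi>_def\<close>)
  have tW: "t = (\<lambda>m. if m \<notin> Window p d then Phi d b \<omega> ^ m / fact m else 0)"
    unfolding t_def Window_def \<mu>_def \<Phi>_def by simp
  have t0: "0 \<le> t m" for m unfolding t_def using P0 by simp
  have t20: "0 \<le> t2 m" for m unfolding t2_def by (simp add: sum_nonneg)
  have t2t: "t2 m \<le> t m" for m
  proof (cases "m \<in> Window p d")
    case True then show ?thesis unfolding t2_def tW by simp
  next
    case False
    have "(\<Sum>S\<in>Good d b m. 1 / 2 ^ NpS d \<omega> S :: real) \<le> (\<Sum>v\<in>side d b. 1 / 2 ^ Np d \<omega> v) ^ m / fact m"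
      by (rule good_sum_le) simp
    then show ?thesis using False unfolding t2_def tW Phi_def by simp
  qed
  have summ: "summable t" using tb by simp
  have summ2: "summable t2"
    by (rule summable_comparison_test'[OF summ]) (use t20 t2t in auto)
  have S0: "0 \<le> suminf t" by (rule suminf_nonneg[OF summ t0])
  have S20: "0 \<le> suminf t2" by (rule suminf_nonneg[OF summ2 t20])
  have S2S: "suminf t2 \<le> suminf t" by (rule suminf_le[OF t2t summ2 summ])
  have sp: "0 < sigma p d" using sigma_pos[of p d] p by simp
  have den: "0 < sigma p d * exp \<mu>" using sp by simp
  have "suminf t / (sigma p d * exp \<mu>) \<le> 2 * exp (\<mu> - \<mu> powr 0.2 / 8) / (sigma p d * exp \<mu>)"
    using tb den by (intro divide_right_mono) auto
  also have "\<dots> = 2 * exp (- (\<mu> powr 0.2 / 8)) / sigma p d"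
  proof -
    have "exp (\<mu> - \<mu> powr 0.2 / 8) = exp (- (\<mu> powr 0.2 / 8)) * exp \<mu>"
      by (simp add: exp_add[symmetric])
    then show ?thesis by simp
  qed
  also have "\<dots> \<le> \<epsilon>" using d(2) sp unfolding \<mu>_def by (simp add: divide_le_eq mult.commute)
  finally have X1le: "suminf t / (sigma p d * exp \<mu>) \<le> \<epsilon>" .
  have X1eq: "X1 p d b \<omega> = suminf t / (sigma p d * exp \<mu>)"
    unfolding X1_def tW \<mu>_def ..
  have X2eq: "X2 p d b \<omega> = suminf t2 / (sigma p d * exp \<mu>)"
    unfolding X2_def t2_def \<mu>_def ..
  have X1n: "0 \<le> X1 p d b \<omega>" unfolding X1eq using S0 den by simp
  have X2n: "0 \<le> X2 p d b \<omega>" unfolding X2eq using S20 den by simp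
  have "X2 p d b \<omega> \<le> X1 p d b \<omega>" unfolding X1eq X2eq using S2S den by (intro divide_right_mono) auto
  then show ?thesis using X1n X2n X1le X1eq by simp
qed

theorem lemma5p2:
  fixes p :: real
  assumes "2/3 \<le> p" and "p < 1"
  shows "\<forall>b::bool. \<forall>\<epsilon>>0.
    ((\<lambda>d. measure_pmf.prob (Qdp d p) {\<omega>. \<bar>X1 p d b \<omega>\<bar> > \<epsilon>}) \<longlonglongrightarrow> 0) \<and>
    ((\<lambda>d. measure_pmf.prob (Qdp d p) {\<omega>. \<bar>X2 p d b \<omega>\<bar> > \<epsilon>}) \<longlonglongrightarrow> 0)"
proof (intro allI impI)
  fix b :: bool and \<epsilon> :: real
  assume e: "\<epsilon> > 0"
  have p: "2/3 \<le> p" "p < 1" by fact+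
  have bnd: "measure_pmf.prob (Qdp d p) {\<omega>. \<bar>X1 p d b \<omega>\<bar> > \<epsilon>} \<le> 128 / (mu p d powr 0.2)\<^sup>2 \<and>
             measure_pmf.prob (Qdp d p) {\<omega>. \<bar>X2 p d b \<omega>\<bar> > \<epsilon>} \<le> 128 / (mu p d powr 0.2)\<^sup>2"
    if d: "1 \<le> d \<and> 2 \<le> mu p d \<and> 2 * exp (- (mu p d powr 0.2 / 8)) \<le> \<epsilon> * sigma p d" for d
  proof -
    define \<eta> where "\<eta> = mu p d powr 0.2 / 16"
    have eta: "\<eta> > 0" unfolding \<eta>_def using d by simp
    have pb: "measure_pmf.prob (Qdp d p) {\<omega>. Phi d b \<omega> > mu p d + \<eta>} \<le> 1 / (2 * \<eta>\<^sup>2)"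
      by (rule prob_Phi_large) (use p d eta in auto)
    have eq: "1 / (2 * \<eta>\<^sup>2) = 128 / (mu p d powr 0.2)\<^sup>2"
      unfolding \<eta>_def by (simp add: power2_eq_square)
    have sub1: "{\<omega>. \<bar>X1 p d b \<omega>\<bar> > \<epsilon>} \<subseteq> {\<omega>. Phi d b \<omega> > mu p d + \<eta>}"
    proof
      fix \<omega> assume "\<omega> \<in> {\<omega>. \<bar>X1 p d b \<omega>\<bar> > \<epsilon>}"
      then have h: "\<bar>X1 p d b \<omega>\<bar> > \<epsilon>" by simp
      show "\<omega> \<in> {\<omega>. Phi d b \<omega> > mu p d + \<eta>}"
      proof (rule ccontr)
        assume "\<omega> \<notin> {\<omega>. Phi d b \<omega> > mu p d + \<eta>}"
        then have "Phi d b \<omega> \<le> mu p d + mu p d powr 0.2 / 16" unfolding \<eta>_def by simp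
        then have "\<bar>X1 p d b \<omega>\<bar> \<le> \<epsilon>" using key_event[OF p e] d by blast
        then show False using h by simp
      qed
    qed
    have sub2: "{\<omega>. \<bar>X2 p d b \<omega>\<bar> > \<epsilon>} \<subseteq> {\<omega>. Phi d b \<omega> > mu p d + \<eta>}"
    proof
      fix \<omega> assume "\<omega> \<in> {\<omega>. \<bar>X2 p d b \<omega>\<bar> > \<epsilon>}"
      then have h: "\<bar>X2 p d b \<omega>\<bar> > \<epsilon>" by simp
      show "\<omega> \<in> {\<omega>. Phi d b \<omega> > mu p d + \<eta>}"
      proof (rule ccontr)
        assume "\<omega> \<notin> {\<omega>. Phi d b \<omega> > mu p d + \<eta>}"
        then have "Phi d b \<omega> \<le> mu p d + mu p d powr 0.2 / 16" unfolding \<eta>_def by simp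
        then have "\<bar>X2 p d b \<omega>\<bar> \<le> \<epsilon>" using key_event[OF p e] d by blast
        then show False using h by simp
      qed
    qed
    have "measure_pmf.prob (Qdp d p) {\<omega>. \<bar>X1 p d b \<omega>\<bar> > \<epsilon>} \<le> measure_pmf.prob (Qdp d p) {\<omega>. Phi d b \<omega> > mu p d + \<eta>}"
      by (rule measure_pmf.finite_measure_mono[OF sub1]) simp
    moreover have "measure_pmf.prob (Qdp d p) {\<omega>. \<bar>X2 p d b \<omega>\<bar> > \<epsilon>} \<le> measure_pmf.prob (Qdp d p) {\<omega>. Phi d b \<omega> > mu p d + \<eta>}"
      by (rule measure_pmf.finite_measure_mono[OF sub2]) simp
    ultimately show ?thesis using pb eq by simp
  qed
  have ev: "eventually (\<lambda>d. 1 \<le> d \<and> 2 \<le> mu p d \<and> 2 * exp (- (mu p d powr 0.2 / 8)) \<le> \<epsilon> * sigma p d) sequentially"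
    by (rule asym[OF p e])
  have lim: "(\<lambda>d. 128 / (mu p d powr 0.2)\<^sup>2) \<longlonglongrightarrow> 0" by (rule lim_bound[OF p])
  show "((\<lambda>d. measure_pmf.prob (Qdp d p) {\<omega>. \<bar>X1 p d b \<omega>\<bar> > \<epsilon>}) \<longlonglongrightarrow> 0) \<and>
    ((\<lambda>d. measure_pmf.prob (Qdp d p) {\<omega>. \<bar>X2 p d b \<omega>\<bar> > \<epsilon>}) \<longlonglongrightarrow> 0)"
  proof
    show "(\<lambda>d. measure_pmf.prob (Qdp d p) {\<omega>. \<bar>X1 p d b \<omega>\<bar> > \<epsilon>}) \<longlonglongrightarrow> 0"
    proof (rule tendsto_sandwich[OF _ _ tendsto_const lim])
      show "\<forall>\<^sub>F n in sequentially. 0 \<le> measure_pmf.prob (Qdp n p) {\<omega>. \<epsilon> < \<bar>X1 p n b \<omega>\<bar>}" by simp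
      show "\<forall>\<^sub>F n in sequentially. measure_pmf.prob (Qdp n p) {\<omega>. \<epsilon> < \<bar>X1 p n b \<omega>\<bar>} \<le> 128 / (mu p n powr 0.2)\<^sup>2"
        using ev by (rule eventually_mono) (use bnd in blast)
    qed
    show "(\<lambda>d. measure_pmf.prob (Qdp d p) {\<omega>. \<bar>X2 p d b \<omega>\<bar> > \<epsilon>}) \<longlonglongrightarrow> 0"
    proof (rule tendsto_sandwich[OF _ _ tendsto_const lim])
      show "\<forall>\<^sub>F n in sequentially. 0 \<le> measure_pmf.prob (Qdp n p) {\<omega>. \<epsilon> < \<bar>X2 p n b \<omega>\<bar>}" by simp
      show "\<forall>\<^sub>F n in sequentially. measure_pmf.prob (Qdp n p) {\<omega>. \<epsilon> < \<bar>X2 p n b \<omega>\<bar>} \<le> 128 / (mu p n powr 0.2)\<^sup>2"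
        using ev by (rule eventually_mono) (use bnd in blast)
    qed
  qed
qed

end
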